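(* Let $R\ge1$, $\mathbf{x}$ a vector of pairwise distinct reals, $\mathbf{c}=(c_1,\dots,c_R)\in\mathbb{R}^R$, and let $\mathbf{u}\in\mathbb{C}^R$ be an eigenvector of $B(\mathbf{x},\mathbf{c})$. Then $$\Big|\sum_{r=1}^R c_ru_r\Big|^2=\sum_{r=1}^R|c_ru_r|^2.$$
   Context: $B(\mathbf{x},\mathbf{c})$ is the $R\times R$ matrix with entries $b_{m,m}=0$ and $b_{m,n}=\frac{c_mc_n}{x_m-x_n}$ for $m\ne n$. *)

theory Defs
  imports "HOL-Analysis.Analysis"
begin

text \<open>The R x R matrix B(x,c), indexed by a finite type 'n with CARD('n) = R,
  viewed as a complex matrix: zero diagonal, off-diagonal c_m c_n / (x_m - x_n).\<close>
definition Bmat :: "('n::finite \<Rightarrow> real) \<Rightarrow> ('n \<Rightarrow> real) \<Rightarrow> complex ^ 'n ^ 'n" where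
  "Bmat x c = (\<chi> m n. if m = n then 0 else complex_of_real (c m * c n / (x m - x n)))"

definition is_eigenvector :: "complex ^ 'n ^ 'n \<Rightarrow> complex ^ 'n \<Rightarrow> bool" where
  "is_eigenvector A u \<longleftrightarrow> u \<noteq> 0 \<and> (\<exists>l. A *v u = l *s u)"

end

theory Submission
  imports Defs
begin

lemma cnj_sq: "cnj z * z = complex_of_real ((cmod z)\<^sup>2)"
  by (metis complex_norm_square mult.commute)

theorem lemma7:
  fixes x :: "'n::finite \<Rightarrow> real" and c :: "'n \<Rightarrow> real" and u :: "complex ^ 'n"
  assumes "inj x"
    and "is_eigenvector (Bmat x c) u"
  shows "(cmod (\<Sum>r\<in>UNIV. complex_of_real (c r) * u $ r))\<^sup>2
         = (\<Sum>r\<in>UNIV. (cmod (complex_of_real (c r) * u $ r))\<^sup>2)"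
proof -
  define b where "b m n = Bmat x c $ m $ n" for m n
  define U where "U r = u $ r" for r
  obtain l where l: "Bmat x c *v u = l *s u" and u0: "u \<noteq> 0"
    using assms(2) unfolding is_eigenvector_def by blast
  have eig: "(\<Sum>n\<in>UNIV. b m n * U n) = l * U m" for m
  proof -
    have "(Bmat x c *v u) $ m = (l *s u) $ m" using l by simp
    thus ?thesis unfolding b_def U_def matrix_vector_mult_def by simp
  qed
  have bcnj: "cnj (b m n) = b m n" for m n
    unfolding b_def Bmat_def by simp
  have banti: "b n m = - b m n" for m n
  proof -
    have "c n * c m / (x n - x m) = - (c m * c n / (x m - x n))"
      by (metis minus_diff_eq divide_minus_right mult.commute)
    thus ?thesis unfolding b_def Bmat_def by auto
  qed
  have key: "complex_of_real (x m - x n) * b m n = (if m = n then 0 else complex_of_real (c m * c n))" for m n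
  proof (cases "m = n")
    case True thus ?thesis unfolding b_def Bmat_def by simp
  next
    case False
    hence "x m - x n \<noteq> 0" using assms(1) by (auto dest: injD)
    thus ?thesis using False unfolding b_def Bmat_def by (simp flip: of_real_mult)
  qed
  define Q where "Q = (\<Sum>m\<in>UNIV. cnj (U m) * (\<Sum>n\<in>UNIV. b m n * U n))"
  define N where "N = (\<Sum>m\<in>UNIV. cnj (U m) * U m)"
  have Q1: "Q = l * N" unfolding Q_def N_def eig by (simp add: sum_distrib_left algebra_simps)
  have "cnj Q = (\<Sum>m\<in>UNIV. \<Sum>n\<in>UNIV. U m * b m n * cnj (U n))"
    unfolding Q_def by (simp add: sum_distrib_left bcnj algebra_simps)
  also have "\<dots> = (\<Sum>n\<in>UNIV. \<Sum>m\<in>UNIV. U m * b m n * cnj (U n))"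
    by (rule sum.swap)
  also have "\<dots> = - Q"
    unfolding Q_def by (subst banti) (simp add: sum_distrib_left sum_negf algebra_simps)
  finally have Q2: "cnj Q = - Q" .
  have Nne: "N \<noteq> 0"
  proof
    assume "N = 0"
    have "N = complex_of_real (\<Sum>m\<in>UNIV. (cmod (U m))\<^sup>2)"
      unfolding N_def by (simp add: cnj_sq)
    with \<open>N = 0\<close> have "(\<Sum>m\<in>UNIV. (cmod (U m))\<^sup>2) = 0" by (metis of_real_eq_0_iff)
    hence "\<forall>m\<in>UNIV. (cmod (U m))\<^sup>2 = 0" by (subst (asm) sum_nonneg_eq_0_iff) auto
    hence "u = 0" unfolding U_def by (simp add: vec_eq_iff)
    with u0 show False by simp
  qed
  have Ncnj: "cnj N = N" unfolding N_def by (simp add: mult.commute)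
  have "cnj l * N = - (l * N)" using Q1 Q2 Ncnj by (metis complex_cnj_mult)
  hence "N * (l + cnj l) = 0" by (simp add: algebra_simps)
  hence lsum: "l + cnj l = 0" using Nne by simp
  define S where "S = (\<Sum>m\<in>UNIV. \<Sum>n\<in>UNIV. cnj (U m) * (complex_of_real (x m - x n) * b m n) * U n)"
  define T where "T = (\<Sum>r\<in>UNIV. complex_of_real (c r) * U r)"
  define P where "P = (\<Sum>r\<in>UNIV. complex_of_real ((cmod (complex_of_real (c r) * U r))\<^sup>2))"
  have TT: "(\<Sum>m\<in>UNIV. \<Sum>n\<in>UNIV. cnj (complex_of_real (c m) * U m) * (complex_of_real (c n) * U n)) = cnj T * T"
      unfolding T_def by (simp add: sum_distrib_left sum_distrib_right) (rule sum.swap)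
  have S1: "S = cnj T * T - P"
  proof -
    have "S = (\<Sum>m\<in>UNIV. \<Sum>n\<in>UNIV. cnj (complex_of_real (c m) * U m) * (complex_of_real (c n) * U n)
               - (if m = n then cnj (complex_of_real (c m) * U m) * (complex_of_real (c n) * U n) else 0))"
      unfolding S_def key by (intro sum.cong refl) (auto simp: algebra_simps)
    also have "\<dots> = (\<Sum>m\<in>UNIV. \<Sum>n\<in>UNIV. cnj (complex_of_real (c m) * U m) * (complex_of_real (c n) * U n))
       - (\<Sum>m\<in>UNIV. cnj (complex_of_real (c m) * U m) * (complex_of_real (c m) * U m))"
      by (simp only: sum_subtractf) (intro arg_cong2[where f=minus] refl sum.cong, simp)
    also have "\<dots> = cnj T * T - P"
      using TT unfolding P_def by (simp only: cnj_sq)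
    finally show ?thesis .
  qed
  have S2: "S = (l + cnj l) * (\<Sum>m\<in>UNIV. complex_of_real (x m) * cnj (U m) * U m)"
  proof -
    have e1: "S = (\<Sum>m\<in>UNIV. complex_of_real (x m) * cnj (U m) * (\<Sum>n\<in>UNIV. b m n * U n))
            - (\<Sum>m\<in>UNIV. \<Sum>n\<in>UNIV. cnj (U m) * b m n * (complex_of_real (x n) * U n))"
      unfolding S_def by (simp add: sum_subtractf sum_distrib_left algebra_simps)
    have e2: "(\<Sum>m\<in>UNIV. \<Sum>n\<in>UNIV. cnj (U m) * b m n * (complex_of_real (x n) * U n))
       = (\<Sum>n\<in>UNIV. \<Sum>m\<in>UNIV. cnj (U m) * b m n * (complex_of_real (x n) * U n))"
      by (rule sum.swap)
    have e3: "(\<Sum>n\<in>UNIV. \<Sum>m\<in>UNIV. cnj (U m) * b m n * (complex_of_real (x n) * U n))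
       = (\<Sum>n\<in>UNIV. - cnj (\<Sum>m\<in>UNIV. b n m * U m) * (complex_of_real (x n) * U n))"
      by (intro sum.cong refl) (simp add: sum_distrib_right bcnj sum_negf flip: sum_negf[of "\<lambda>m. b m _ * cnj (U m)", simplified] , subst banti, simp add: algebra_simps sum_negf)
    have e4: "(\<Sum>n\<in>UNIV. - cnj (\<Sum>m\<in>UNIV. b n m * U m) * (complex_of_real (x n) * U n))
       = - (cnj l * (\<Sum>m\<in>UNIV. complex_of_real (x m) * cnj (U m) * U m))"
      by (simp only: eig complex_cnj_mult) (simp add: algebra_simps sum_distrib_left sum_negf)
    have e5: "(\<Sum>m\<in>UNIV. complex_of_real (x m) * cnj (U m) * (\<Sum>n\<in>UNIV. b m n * U n))
       = l * (\<Sum>m\<in>UNIV. complex_of_real (x m) * cnj (U m) * U m)"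
      by (simp only: eig) (simp add: algebra_simps sum_distrib_left)
    show ?thesis unfolding e1 e2 e3 e4 e5 by (simp only: distrib_right diff_minus_eq_add)
  qed
  have "cnj T * T - P = 0" using S1 S2 lsum by (metis mult_zero_left)
  hence "cnj T * T = P" by (simp only: right_minus_eq)
  hence "complex_of_real ((cmod T)\<^sup>2) = P" by (simp only: cnj_sq)
  hence "(cmod T)\<^sup>2 = (\<Sum>r\<in>UNIV. (cmod (complex_of_real (c r) * U r))\<^sup>2)"
    unfolding P_def of_real_sum[symmetric] of_real_eq_iff .
  thus ?thesis unfolding T_def U_def .
qed

end
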